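(* For all $n\in\mathbb N$ the following hold in the $q$-shuffle algebra $\mathbb V$: $$G_n=q^{2n}D_n+q^2\sum_{\substack{i+j+k+1=n\\ i,j,k\ge0}}W_{-i}\star D_j\star W_{k+1},$$ $$G_n=q^{-2n}D_n+\sum_{\substack{i+j+k+1=n\\ i,j,k\ge0}}W_{k+1}\star D_j\star W_{-i}.$$
   Context: Let $\mathbb F$ be a field and let $q\in\mathbb F$ be nonzero and not a root of unity. Let $\mathbb V$ be the free associative $\mathbb F$-algebra on noncommuting $x,y$, with basis the words (including $1$). Juxtaposition denotes concatenation. Set $\langle x,x\rangle=\langle y,y\rangle=2$ and $\langle x,y\rangle=\langle y,x\rangle=-2$. The $q$-shuffle product $\star$ is the bilinear product determined as follows: - $1\star v=v\star 1=v$; - for nontrivial words $u=u_1\cdots u_r$ and $v=v_1\cdots v_s$, $$u\star v=u_1((u_2\cdots u_r)\star v)+v_1(u\star(v_2\cdots v_s))q^{\langle u_1,v_1\rangle+\cdots+\langle u_r,v_1\rangle}.$$ This makes $\mathbb V$ an associative algebra, the $q$-shuffle algebra. For $k\in\mathbb N$: - $W_{-k}=xyx\cdots x$ is the alternating word of length $2k+1$ beginning and ending with $x$; - $W_{k+1}=yxy\cdots y$ is the alternating word of length $2k+1$ beginning and ending with $y$; - $G_k=yxyx\cdots yx$ is the word of length $2k$; - $\tilde G_k=xyxy\cdots xy$ is the word of length $2k$; - $G_0=\tilde G_0=1$. Define $\{D_n\}_{n\in\mathbb N}\subseteq\mathbb V$ recursively by $D_0=1$ and, for $n\ge1$, $\sum_{i=0}^n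 D_i\star\tilde G_{n-i}=0$. *)

theory Defs
  imports Main "HOL-Library.Poly_Mapping"
begin

datatype letter = X | Y

type_synonym word = "letter list"

type_synonym 'a qvec = "word \<Rightarrow>\<^sub>0 'a"

definition wd :: "word \<Rightarrow> 'a::field qvec" where
  "wd w = Poly_Mapping.single w 1"

definition one_V :: "'a::field qvec" where
  "one_V = wd []"

definition sc :: "'a::field \<Rightarrow> 'a qvec \<Rightarrow> 'a qvec" where
  "sc c p = Poly_Mapping.map (\<lambda>t. c * t) p"

definition prep :: "letter \<Rightarrow> 'a::field qvec \<Rightarrow> 'a qvec" where
  "prep a p = (\<Sum>w\<in>Poly_Mapping.keys p. Poly_Mapping.single (a # w) (Poly_Mapping.lookup p w))"

definition bil :: "letter \<Rightarrow> letter \<Rightarrow> int" where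
  "bil a b = (if a = b then 2 else -2)"

fun qsh :: "'a::field \<Rightarrow> word \<Rightarrow> word \<Rightarrow> 'a qvec" where
  "qsh q [] v = wd v"
| "qsh q (a # u) [] = wd (a # u)"
| "qsh q (a # u) (b # v) =
     prep a (qsh q u (b # v))
     + sc (q powi (\<Sum>c\<leftarrow>a # u. bil c b)) (prep b (qsh q (a # u) v))"

definition qstar :: "'a::field \<Rightarrow> 'a qvec \<Rightarrow> 'a qvec \<Rightarrow> 'a qvec" where
  "qstar q f g = (\<Sum>u\<in>Poly_Mapping.keys f. \<Sum>v\<in>Poly_Mapping.keys g. sc (Poly_Mapping.lookup f u * Poly_Mapping.lookup g v) (qsh q u v))"

text \<open>Wneg k = W_{-k} = xyx...x of length 2k+1.\<close>
definition Wneg :: "nat \<Rightarrow> word" where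
  "Wneg k = map (\<lambda>i. if even i then X else Y) [0..<2*k+1]"

text \<open>Wpos k = W_{k+1} = yxy...y of length 2k+1.\<close>
definition Wpos :: "nat \<Rightarrow> word" where
  "Wpos k = map (\<lambda>i. if even i then Y else X) [0..<2*k+1]"

text \<open>Gw k = G_k = yxyx...yx of length 2k.\<close>
definition Gw :: "nat \<Rightarrow> word" where
  "Gw k = map (\<lambda>i. if even i then Y else X) [0..<2*k]"

text \<open>Gtw k = tilde G_k = xyxy...xy of length 2k.\<close>
definition Gtw :: "nat \<Rightarrow> word" where
  "Gtw k = map (\<lambda>i. if even i then X else Y) [0..<2*k]"

end

theory Submission
  imports Defs
begin

abbreviation lk :: "('b \<Rightarrow>\<^sub>0 'c::zero) \<Rightarrow> 'b \<Rightarrow> 'c" where "lk \<equiv> Poly_Mapping.lookup"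

lemma lookup_sc [simp]: "lk (sc c p) w = c * lk p w"
  by (simp add: sc_def map.rep_eq when_def)

lemma lookup_wd: "lk (wd u) w = (if u = w then 1 else 0)"
  by (simp add: wd_def lookup_single when_def)

lemma sc_add: "sc c (x + y) = sc c x + sc c y"
  by (rule poly_mapping_eqI) (simp add: lookup_add algebra_simps)
lemma sc_add_left: "sc (c + d) x = sc c x + sc d x"
  by (rule poly_mapping_eqI) (simp add: lookup_add algebra_simps)
lemma sc_zero [simp]: "sc c 0 = 0"
  by (rule poly_mapping_eqI) simp
lemma sc_0 [simp]: "sc 0 x = 0"
  by (rule poly_mapping_eqI) simp
lemma sc_1 [simp]: "sc 1 x = x"
  by (rule poly_mapping_eqI) simp
lemma sc_sc [simp]: "sc c (sc d x) = sc (c * d) x"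
  by (rule poly_mapping_eqI) simp
lemma sc_uminus: "sc c (- x) = - sc c x"
  by (rule poly_mapping_eqI) simp
lemma sc_diff: "sc c (x - y) = sc c x - sc c y"
  by (rule poly_mapping_eqI) (simp add: lookup_minus algebra_simps)
lemma sc_sum: "sc c (\<Sum>i\<in>A. f i) = (\<Sum>i\<in>A. sc c (f i))"
  by (induction A rule: infinite_finite_induct) (simp_all add: sc_add)
lemma sc_wd: "sc c (wd w) = Poly_Mapping.single w c"
  by (rule poly_mapping_eqI) (simp add: lookup_wd lookup_single when_def)

lemma lookup_prep: "lk (prep a p) w =
   (case w of [] \<Rightarrow> 0 | b # w' \<Rightarrow> if b = a then lk p w' else 0)"
proof -
  have "lk (prep a p) w = (\<Sum>x\<in>Poly_Mapping.keys p. if a # x = w then lk p x else 0)"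
    by (simp add: prep_def lookup_sum lookup_single when_def)
  also have "\<dots> = (case w of [] \<Rightarrow> 0 | b # w' \<Rightarrow> if b = a then lk p w' else 0)"
  proof (cases w)
    case Nil then show ?thesis by simp
  next
    case (Cons b w')
    show ?thesis
    proof (cases "b = a")
      case True
      have "(\<Sum>x\<in>Poly_Mapping.keys p. if a # x = w then lk p x else 0) = (\<Sum>x\<in>Poly_Mapping.keys p. if x = w' then lk p x else 0)"
        using Cons True by (intro sum.cong) auto
      also have "\<dots> = lk p w'"
        by (simp add: sum.delta' in_keys_iff)
      finally show ?thesis using Cons True by simp
    qed (use Cons in auto)
  qed
  finally show ?thesis .
qed

definition der :: "letter \<Rightarrow> 'a::field qvec \<Rightarrow> 'a qvec" where
  "der a p = Abs_poly_mapping (\<lambda>w. lk p (a # w))"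

lemma lookup_der [simp]: "lk (der a p) w = lk p (a # w)"
proof -
  have "{w. lk p (a # w) \<noteq> 0} \<subseteq> tl ` Poly_Mapping.keys p"
    by (auto simp: in_keys_iff image_iff intro!: bexI[where x="a # _"])
  then have "finite {w. lk p (a # w) \<noteq> 0}"
    by (rule finite_subset) simp
  then show ?thesis by (simp add: der_def)
qed

definition wt :: "word \<Rightarrow> letter \<Rightarrow> int" where
  "wt w b = (\<Sum>c\<leftarrow>w. bil c b)"

lemma wt_Nil [simp]: "wt [] b = 0" by (simp add: wt_def)
lemma wt_Cons [simp]: "wt (c # w) b = bil c b + wt w b" by (simp add: wt_def)

definition Kop :: "'a::field \<Rightarrow> letter \<Rightarrow> 'a qvec \<Rightarrow> 'a qvec" where
  "Kop q a p = Abs_poly_mapping (\<lambda>w. q powi wt w a * lk p w)"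

lemma lookup_Kop [simp]: "lk (Kop q a p) w = q powi wt w a * lk p w"
proof -
  have "{w. q powi wt w a * lk p w \<noteq> 0} \<subseteq> Poly_Mapping.keys p"
    by (auto simp: in_keys_iff)
  then have "finite {w. q powi wt w a * lk p w \<noteq> 0}"
    by (rule finite_subset) simp
  then show ?thesis by (simp add: Kop_def)
qed

lemma der_add: "der a (x + y) = der a x + der a y"
  by (rule poly_mapping_eqI) (simp add: lookup_add)
lemma der_zero [simp]: "der a 0 = 0"
  by (rule poly_mapping_eqI) simp
lemma der_sc: "der a (sc c x) = sc c (der a x)"
  by (rule poly_mapping_eqI) simp
lemma der_uminus: "der a (- x) = - der a x"
  by (rule poly_mapping_eqI) simp
lemma der_diff: "der a (x - y) = der a x - der a y"
  by (rule poly_mapping_eqI) (simp add: lookup_minus)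
lemma der_sum: "der a (\<Sum>i\<in>A. f i) = (\<Sum>i\<in>A. der a (f i))"
  by (induction A rule: infinite_finite_induct) (simp_all add: der_add)
lemma der_prep: "der a (prep b p) = (if b = a then p else 0)"
  by (rule poly_mapping_eqI) (simp add: lookup_prep)
lemma der_wd_Nil [simp]: "der a (wd []) = 0"
  by (rule poly_mapping_eqI) (simp add: lookup_wd)
lemma der_wd_Cons: "der a (wd (b # w)) = (if b = a then wd w else 0)"
  by (rule poly_mapping_eqI) (auto simp add: lookup_wd)

lemma Kop_add: "Kop q a (x + y) = Kop q a x + Kop q a y"
  by (rule poly_mapping_eqI) (simp add: lookup_add algebra_simps)
lemma Kop_zero [simp]: "Kop q a 0 = 0"
  by (rule poly_mapping_eqI) simp
lemma Kop_sc: "Kop q a (sc c x) = sc c (Kop q a x)"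
  by (rule poly_mapping_eqI) simp
lemma Kop_sum: "Kop q a (\<Sum>i\<in>A. f i) = (\<Sum>i\<in>A. Kop q a (f i))"
  by (induction A rule: infinite_finite_induct) (simp_all add: Kop_add)
lemma Kop_wd: "Kop q a (wd w) = sc (q powi wt w a) (wd w)"
  by (rule poly_mapping_eqI) (simp add: lookup_wd)

lemma qv_ext:
  fixes P Q :: "'a::field qvec"
  assumes "lk P [] = lk Q []" and "\<And>a. der a P = der a Q"
  shows "P = Q"
proof (rule poly_mapping_eqI)
  fix w show "lk P w = lk Q w"
  proof (cases w)
    case Nil then show ?thesis using assms by simp
  next
    case (Cons a w')
    have "lk (der a P) w' = lk (der a Q) w'" using assms by simp
    then show ?thesis using Cons by simp
  qed
qed

lemma qsh_Nil2 [simp]: "qsh q u [] = wd u"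
  by (cases u) simp_all

lemma qsh_CC: "qsh q (a # u) (b # v) =
     prep a (qsh q u (b # v)) + sc (q powi wt (a # u) b) (prep b (qsh q (a # u) v))"
  by (simp only: qsh.simps wt_def)

declare qsh.simps(3) [simp del]

lemma der_qsh: "der a (qsh q u v) =
   (case u of [] \<Rightarrow> 0 | b # u' \<Rightarrow> if b = a then qsh q u' v else 0)
 + (case v of [] \<Rightarrow> 0 | b # v' \<Rightarrow> if b = a then sc (q powi wt u a) (qsh q u v') else 0)"
proof (cases u)
  case Nil
  then show ?thesis by (cases v) (auto simp: der_wd_Cons)
next
  case (Cons b u')
  then show ?thesis
    by (cases v) (auto simp: der_wd_Cons qsh_CC der_add der_sc der_prep)
qed

lemma lookup_qsh_Nil: "lk (qsh q u v) [] = (if u = [] \<and> v = [] then 1 else 0)"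
proof (cases u)
  case Nil then show ?thesis by (simp add: lookup_wd)
next
  case (Cons b u')
  then show ?thesis by (cases v) (auto simp: lookup_wd qsh_CC lookup_add lookup_prep)
qed


lemma qstar_expand:
  assumes "finite A" "Poly_Mapping.keys f \<subseteq> A" "finite B" "Poly_Mapping.keys g \<subseteq> B"
  shows "qstar q f g = (\<Sum>u\<in>A. \<Sum>v\<in>B. sc (lk f u * lk g v) (qsh q u v))"
proof -
  have "qstar q f g = (\<Sum>u\<in>Poly_Mapping.keys f. \<Sum>v\<in>B. sc (lk f u * lk g v) (qsh q u v))"
    unfolding qstar_def
    by (intro sum.cong refl sum.mono_neutral_left assms) (auto simp: in_keys_iff)
  also have "\<dots> = (\<Sum>u\<in>A. \<Sum>v\<in>B. sc (lk f u * lk g v) (qsh q u v))"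
    by (intro sum.mono_neutral_left assms) (auto simp: in_keys_iff)
  finally show ?thesis .
qed

lemma keys_sc: "Poly_Mapping.keys (sc c x) \<subseteq> Poly_Mapping.keys x"
  by (auto simp: in_keys_iff)

lemma qstar_add_left: "qstar q (x + y) z = qstar q x z + qstar q y z"
proof -
  let ?A = "Poly_Mapping.keys x \<union> Poly_Mapping.keys y"
  let ?B = "Poly_Mapping.keys z"
  have k: "Poly_Mapping.keys (x + y) \<subseteq> ?A" by (rule keys_add)
  show ?thesis
    by (subst (1 2 3) qstar_expand[where A="?A" and B="?B"])
       (use k in \<open>auto simp: lookup_add algebra_simps sc_add_left sum.distrib\<close>)
qed

lemma qstar_add_right: "qstar q z (x + y) = qstar q z x + qstar q z y"
proof -
  let ?A = "Poly_Mapping.keys x \<union> Poly_Mapping.keys y"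
  let ?B = "Poly_Mapping.keys z"
  have k: "Poly_Mapping.keys (x + y) \<subseteq> ?A" by (rule keys_add)
  show ?thesis
    by (subst (1 2 3) qstar_expand[where A="?B" and B="?A"])
       (use k in \<open>auto simp: lookup_add algebra_simps sc_add_left sum.distrib\<close>)
qed

lemma qstar_sc_left: "qstar q (sc c x) z = sc c (qstar q x z)"
  by (subst (1 2) qstar_expand[where A="Poly_Mapping.keys x" and B="Poly_Mapping.keys z"])
     (use keys_sc in \<open>auto simp: sc_sum mult.assoc\<close>)

lemma qstar_sc_right: "qstar q z (sc c x) = sc c (qstar q z x)"
  by (subst (1 2) qstar_expand[where A="Poly_Mapping.keys z" and B="Poly_Mapping.keys x"])
     (use keys_sc in \<open>auto simp: sc_sum algebra_simps\<close>)

lemma keys_wd: "Poly_Mapping.keys (wd u :: 'a::field qvec) = {u}"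
  by (simp add: wd_def)

lemma qstar_wd: "qstar q (wd u) (wd v) = qsh q u v"
  by (simp add: qstar_def keys_wd lookup_wd)

definition lin :: "('a::field qvec \<Rightarrow> 'a qvec) \<Rightarrow> bool" where
  "lin F \<longleftrightarrow> (\<forall>x y. F (x + y) = F x + F y) \<and> (\<forall>c x. F (sc c x) = sc c (F x))"

lemma linI: "(\<And>x y. F (x + y) = F x + F y) \<Longrightarrow> (\<And>c x. F (sc c x) = sc c (F x)) \<Longrightarrow> lin F"
  by (simp add: lin_def)

lemma lin_zero: "lin F \<Longrightarrow> F 0 = 0"
  unfolding lin_def by (metis sc_0)

lemma lin_sum: "lin F \<Longrightarrow> F (\<Sum>i\<in>A. f i) = (\<Sum>i\<in>A. F (f i))"
  by (induction A rule: infinite_finite_induct) (auto simp: lin_zero, simp add: lin_def)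

lemma qvec_expand: "p = (\<Sum>w\<in>Poly_Mapping.keys p. sc (lk p w) (wd w))"
proof (rule poly_mapping_eqI)
  fix k
  show "lk p k = lk (\<Sum>w\<in>Poly_Mapping.keys p. sc (lk p w) (wd w)) k"
  proof -
    have "lk (\<Sum>w\<in>Poly_Mapping.keys p. sc (lk p w) (wd w)) k
        = (\<Sum>x\<in>Poly_Mapping.keys p. if x = k then lk p x else 0)"
      by (simp add: lookup_sum lookup_wd if_distrib[of "\<lambda>t. _ * t"] cong: if_cong)
    also have "\<dots> = lk p k" by (simp add: sum.delta' in_keys_iff)
    finally show ?thesis by simp
  qed
qed

lemma lin_ext:
  assumes "lin F" "lin G" "\<And>w. F (wd w) = G (wd w)"
  shows "F p = G p"
proof -
  have "F p = F (\<Sum>w\<in>Poly_Mapping.keys p. sc (lk p w) (wd w))"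
    by (subst qvec_expand) rule
  also have "\<dots> = (\<Sum>w\<in>Poly_Mapping.keys p. sc (lk p w) (F (wd w)))"
    using assms(1) by (simp add: lin_sum) (simp add: lin_def)
  also have "\<dots> = (\<Sum>w\<in>Poly_Mapping.keys p. sc (lk p w) (G (wd w)))"
    using assms(3) by simp
  also have "\<dots> = G (\<Sum>w\<in>Poly_Mapping.keys p. sc (lk p w) (wd w))"
    using assms(2) by (simp add: lin_sum) (simp add: lin_def)
  also have "\<dots> = G p" by (subst (2) qvec_expand) rule
  finally show ?thesis .
qed

lemma lin_qstar_left: "lin (\<lambda>P. qstar q P Q)"
  by (rule linI) (simp_all add: qstar_add_left qstar_sc_left)
lemma lin_qstar_right: "lin (\<lambda>P. qstar q Q P)"
  by (rule linI) (simp_all add: qstar_add_right qstar_sc_right)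

lemma qstar_zero_left [simp]: "qstar q 0 P = 0"
  using lin_zero[OF lin_qstar_left] by blast
lemma qstar_zero_right [simp]: "qstar q P 0 = 0"
  using lin_zero[OF lin_qstar_right] by blast
lemma qstar_sum_left: "qstar q (\<Sum>i\<in>A. f i) P = (\<Sum>i\<in>A. qstar q (f i) P)"
  using lin_sum[OF lin_qstar_left] by blast
lemma qstar_sum_right: "qstar q P (\<Sum>i\<in>A. f i) = (\<Sum>i\<in>A. qstar q P (f i))"
  using lin_sum[OF lin_qstar_right] by blast

lemma qstar_uminus_left: "qstar q (- x) P = - qstar q x P"
proof -
  have "qstar q (- x) P + qstar q x P = 0"
    by (simp only: qstar_add_left[symmetric] add.left_inverse qstar_zero_left)
  then show ?thesis by (simp add: eq_neg_iff_add_eq_0)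
qed
lemma qstar_uminus_right: "qstar q P (- x) = - qstar q P x"
proof -
  have "qstar q P (- x) + qstar q P x = 0"
    by (simp only: qstar_add_right[symmetric] add.left_inverse qstar_zero_right)
  then show ?thesis by (simp add: eq_neg_iff_add_eq_0)
qed
lemma qstar_diff_left: "qstar q (x - y) P = qstar q x P - qstar q y P"
  by (simp only: diff_conv_add_uminus qstar_add_left qstar_uminus_left)
lemma qstar_diff_right: "qstar q P (x - y) = qstar q P x - qstar q P y"
  by (simp only: diff_conv_add_uminus qstar_add_right qstar_uminus_right)

lemma lin_id: "lin (\<lambda>x. x)" by (simp add: lin_def)

lemma qstar_one_left [simp]: "qstar q (wd []) P = P"
  by (rule lin_ext[OF lin_qstar_right lin_id]) (simp add: qstar_wd)
lemma qstar_one_right [simp]: "qstar q P (wd []) = P"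
  by (rule lin_ext[OF lin_qstar_left lin_id]) (simp add: qstar_wd)

lemma lin_der: "lin (der a)"
  by (rule linI) (simp_all add: der_add der_sc)
lemma lin_Kop: "lin (Kop q a)"
  by (rule linI) (simp_all add: Kop_add Kop_sc)

lemma lin_add: "lin F \<Longrightarrow> lin G \<Longrightarrow> lin (\<lambda>x. F x + G x)"
  by (simp add: lin_def sc_add)
lemma lin_comp: "lin F \<Longrightarrow> lin G \<Longrightarrow> lin (\<lambda>x. F (G x))"
  by (simp add: lin_def)

lemma lookup_qstar_Nil: "lk (qstar q P Q) [] = lk P [] * lk Q []"
proof -
  have lw: "lin (\<lambda>P. sc (lk P []) (wd []))"
    by (rule linI) (simp_all add: lookup_add sc_add_left)
  have "sc (lk (qstar q P Q) []) (wd []) = sc (lk P [] * lk Q []) (wd [])"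
  proof (rule lin_ext[where F="\<lambda>P. sc (lk (qstar q P Q) []) (wd [])"
                      and G="\<lambda>P. sc (lk P [] * lk Q []) (wd [])"])
    show "lin (\<lambda>P. sc (lk (qstar q P Q) []) (wd []))"
      by (rule lin_comp[OF lw lin_qstar_left])
    show "lin (\<lambda>P. sc (lk P [] * lk Q []) (wd []))"
      by (rule linI) (simp_all add: lookup_add sc_add_left algebra_simps)
    fix u
    show "sc (lk (qstar q (wd u) Q) []) (wd []) = sc (lk (wd u) [] * lk Q []) (wd [])"
    proof (rule lin_ext[where F="\<lambda>Q. sc (lk (qstar q (wd u) Q) []) (wd [])"
                      and G="\<lambda>Q. sc (lk (wd u) [] * lk Q []) (wd [])"])
      show "lin (\<lambda>Q. sc (lk (qstar q (wd u) Q) []) (wd []))"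
        by (rule lin_comp[OF lw lin_qstar_right])
      show "lin (\<lambda>Q. sc (lk (wd u) [] * lk Q []) (wd []))"
        by (rule linI) (simp_all add: lookup_add sc_add_left algebra_simps)
    qed (simp add: qstar_wd lookup_qsh_Nil lookup_wd)
  qed
  then have "lk (sc (lk (qstar q P Q) []) (wd [])) [] = lk (sc (lk P [] * lk Q []) (wd [])) []"
    by simp
  then show ?thesis by (simp add: lookup_wd)
qed

lemma der_wd: "der a (wd u) = (case u of [] \<Rightarrow> 0 | b # u' \<Rightarrow> if b = a then wd u' else 0)"
  by (cases u) (simp_all add: der_wd_Cons)

lemma der_qstar: "der a (qstar q P Q) = qstar q (der a P) Q + qstar q (Kop q a P) (der a Q)"
proof (rule lin_ext[where F="\<lambda>P. der a (qstar q P Q)"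
                   and G="\<lambda>P. qstar q (der a P) Q + qstar q (Kop q a P) (der a Q)"])
  show "lin (\<lambda>P. der a (qstar q P Q))" by (rule lin_comp[OF lin_der lin_qstar_left])
  show "lin (\<lambda>P. qstar q (der a P) Q + qstar q (Kop q a P) (der a Q))"
    by (intro lin_add lin_comp[OF lin_qstar_left lin_der] lin_comp[OF lin_qstar_left lin_Kop])
  fix u
  show "der a (qstar q (wd u) Q) = qstar q (der a (wd u)) Q + qstar q (Kop q a (wd u)) (der a Q)"
  proof (rule lin_ext[where F="\<lambda>Q. der a (qstar q (wd u) Q)"
                   and G="\<lambda>Q. qstar q (der a (wd u)) Q + qstar q (Kop q a (wd u)) (der a Q)"])
    show "lin (\<lambda>Q. der a (qstar q (wd u) Q))" by (rule lin_comp[OF lin_der lin_qstar_right])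
    show "lin (\<lambda>Q. qstar q (der a (wd u)) Q + qstar q (Kop q a (wd u)) (der a Q))"
      by (intro lin_add lin_qstar_right lin_comp[OF lin_qstar_right lin_der])
    fix v
    show "der a (qstar q (wd u) (wd v)) = qstar q (der a (wd u)) (wd v) + qstar q (Kop q a (wd u)) (der a (wd v))"
      by (cases u; cases v) (auto simp: qstar_wd der_qsh der_wd Kop_wd qstar_sc_left)
  qed
qed


lemma prep_add: "prep b (x + y) = prep b x + prep b y"
  by (rule poly_mapping_eqI) (auto simp: lookup_prep lookup_add split: list.split)
lemma prep_sc: "prep b (sc c x) = sc c (prep b x)"
  by (rule poly_mapping_eqI) (auto simp: lookup_prep split: list.split)

lemma Kop_prep:
  assumes "q \<noteq> 0"
  shows "Kop q a (prep b p) = sc (q powi bil b a) (prep b (Kop q a p))"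
  by (rule poly_mapping_eqI) (auto simp: lookup_prep power_int_add assms split: list.split)

lemma Kop_qsh:
  "q \<noteq> 0 \<Longrightarrow> Kop q a (qsh q u v) = sc (q powi (wt u a + wt v a)) (qsh q u v)"
proof (induction q u v rule: qsh.induct)
  case (1 q v)
  then show ?case by (simp add: Kop_wd)
next
  case (2 q a u)
  then show ?case by (simp add: Kop_wd)
next
  case (3 q c u b v)
  then show ?case
    by (simp add: qsh_CC Kop_add Kop_sc Kop_prep prep_sc sc_add power_int_add mult_ac del: wt_Cons)
       (simp add: power_int_add mult_ac)
qed

lemma Kop_qstar:
  assumes q: "q \<noteq> 0"
  shows "Kop q a (qstar q P Q) = qstar q (Kop q a P) (Kop q a Q)"
proof (rule lin_ext[where F="\<lambda>P. Kop q a (qstar q P Q)" and G="\<lambda>P. qstar q (Kop q a P) (Kop q a Q)"])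
  show "lin (\<lambda>P. Kop q a (qstar q P Q))" by (rule lin_comp[OF lin_Kop lin_qstar_left])
  show "lin (\<lambda>P. qstar q (Kop q a P) (Kop q a Q))" by (rule lin_comp[OF lin_qstar_left lin_Kop])
  fix u
  show "Kop q a (qstar q (wd u) Q) = qstar q (Kop q a (wd u)) (Kop q a Q)"
  proof (rule lin_ext[where F="\<lambda>Q. Kop q a (qstar q (wd u) Q)" and G="\<lambda>Q. qstar q (Kop q a (wd u)) (Kop q a Q)"])
    show "lin (\<lambda>Q. Kop q a (qstar q (wd u) Q))" by (rule lin_comp[OF lin_Kop lin_qstar_right])
    show "lin (\<lambda>Q. qstar q (Kop q a (wd u)) (Kop q a Q))" by (rule lin_comp[OF lin_qstar_right lin_Kop])
    fix v
    show "Kop q a (qstar q (wd u) (wd v)) = qstar q (Kop q a (wd u)) (Kop q a (wd v))"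
      by (simp add: qstar_wd Kop_qsh[OF q] Kop_wd qstar_sc_left qstar_sc_right power_int_add q mult.commute)
  qed
qed

lemma der_wd_Cons': "der a (wd (b # w)) = sc (if b = a then 1 else 0) (wd w)"
  by (simp add: der_wd_Cons)

lemma assoc_wd:
  assumes q: "q \<noteq> 0"
  shows "qstar q (qstar q (wd u) (wd v)) (wd w) = qstar q (wd u) (qstar q (wd v) (wd w))"
proof (induction "length u + length v + length w" arbitrary: u v w rule: less_induct)
  case less
  show ?case
  proof (cases "u = [] \<or> v = [] \<or> w = []")
    case True
    then show ?thesis by auto
  next
    case False
    then obtain b u' c v' d w' where u: "u = b # u'" and v: "v = c # v'" and w: "w = d # w'"
      by (meson neq_Nil_conv)
    have IH: "qstar q (qstar q (wd x) (wd y)) (wd z) = qstar q (wd x) (qstar q (wd y) (wd z))"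
      if "length x + length y + length z < length u + length v + length w" for x y z
      using less that by blast
    have i1: "qstar q (qstar q (wd u') (wd v)) (wd w) = qstar q (wd u') (qstar q (wd v) (wd w))"
      by (rule IH) (simp add: u)
    have i2: "qstar q (qstar q (wd u) (wd v')) (wd w) = qstar q (wd u) (qstar q (wd v') (wd w))"
      by (rule IH) (simp add: v)
    have i3: "qstar q (qstar q (wd u) (wd v)) (wd w') = qstar q (wd u) (qstar q (wd v) (wd w'))"
      by (rule IH) (simp add: w)
    show ?thesis
    proof (rule qv_ext)
      show "lk (qstar q (qstar q (wd u) (wd v)) (wd w)) [] = lk (qstar q (wd u) (qstar q (wd v) (wd w))) []"
        by (simp add: lookup_qstar_Nil)
      fix a
      have L: "der a (qstar q (qstar q (wd u) (wd v)) (wd w)) =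
         sc (if b = a then 1 else 0) (qstar q (qstar q (wd u') (wd v)) (wd w))
       + sc ((q powi wt u a) * (if c = a then 1 else 0)) (qstar q (qstar q (wd u) (wd v')) (wd w))
       + sc ((q powi wt u a) * (q powi wt v a) * (if d = a then 1 else 0)) (qstar q (qstar q (wd u) (wd v)) (wd w'))"
        unfolding der_qstar Kop_qstar[OF q]
        by (simp add: u v w der_wd_Cons' Kop_wd qstar_sc_left qstar_sc_right qstar_add_left mult_ac del: wt_Cons)
      have R: "der a (qstar q (wd u) (qstar q (wd v) (wd w))) =
         sc (if b = a then 1 else 0) (qstar q (wd u') (qstar q (wd v) (wd w)))
       + sc ((q powi wt u a) * (if c = a then 1 else 0)) (qstar q (wd u) (qstar q (wd v') (wd w)))
       + sc ((q powi wt u a) * (q powi wt v a) * (if d = a then 1 else 0)) (qstar q (wd u) (qstar q (wd v) (wd w')))"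
        unfolding der_qstar Kop_qstar[OF q]
        by (simp add: u v w der_wd_Cons' Kop_wd qstar_sc_left qstar_sc_right qstar_add_right add.assoc mult_ac del: wt_Cons)
      show "der a (qstar q (qstar q (wd u) (wd v)) (wd w)) = der a (qstar q (wd u) (qstar q (wd v) (wd w)))"
        unfolding L R i1 i2 i3 ..
    qed
  qed
qed

lemma qstar_assoc:
  assumes q: "q \<noteq> 0"
  shows "qstar q (qstar q P Q) R = qstar q P (qstar q Q R)"
proof (rule lin_ext[where F="\<lambda>P. qstar q (qstar q P Q) R" and G="\<lambda>P. qstar q P (qstar q Q R)"])
  show "lin (\<lambda>P. qstar q (qstar q P Q) R)" by (rule lin_comp[OF lin_qstar_left lin_qstar_left])
  show "lin (\<lambda>P. qstar q P (qstar q Q R))" by (rule lin_qstar_left)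
  fix u
  show "qstar q (qstar q (wd u) Q) R = qstar q (wd u) (qstar q Q R)"
  proof (rule lin_ext[where F="\<lambda>Q. qstar q (qstar q (wd u) Q) R" and G="\<lambda>Q. qstar q (wd u) (qstar q Q R)"])
    show "lin (\<lambda>Q. qstar q (qstar q (wd u) Q) R)" by (rule lin_comp[OF lin_qstar_left lin_qstar_right])
    show "lin (\<lambda>Q. qstar q (wd u) (qstar q Q R))" by (rule lin_comp[OF lin_qstar_right lin_qstar_left])
    fix v
    show "qstar q (qstar q (wd u) (wd v)) R = qstar q (wd u) (qstar q (wd v) R)"
    proof (rule lin_ext[where F="\<lambda>R. qstar q (qstar q (wd u) (wd v)) R" and G="\<lambda>R. qstar q (wd u) (qstar q (wd v) R)"])
      show "lin (\<lambda>R. qstar q (qstar q (wd u) (wd v)) R)" by (rule lin_qstar_right)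
      show "lin (\<lambda>R. qstar q (wd u) (qstar q (wd v) R))" by (rule lin_comp[OF lin_qstar_right lin_qstar_right])
    qed (rule assoc_wd[OF q])
  qed
qed


definition conv :: "'a::field \<Rightarrow> (nat \<Rightarrow> 'a qvec) \<Rightarrow> (nat \<Rightarrow> 'a qvec) \<Rightarrow> nat \<Rightarrow> 'a qvec" where
  "conv q f g n = (\<Sum>i\<in>{0..n}. qstar q (f i) (g (n - i)))"

definition dl :: "nat \<Rightarrow> 'a::field qvec" where
  "dl n = (if n = 0 then wd [] else 0)"

definition shift :: "(nat \<Rightarrow> 'a::field qvec) \<Rightarrow> nat \<Rightarrow> 'a qvec" where
  "shift f n = (case n of 0 \<Rightarrow> 0 | Suc m \<Rightarrow> f m)"

definition scale :: "'a::field \<Rightarrow> (nat \<Rightarrow> 'a qvec) \<Rightarrow> nat \<Rightarrow> 'a qvec" where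
  "scale c f n = sc (c ^ n) (f n)"

lemma shift_0 [simp]: "shift f 0 = 0" by (simp add: shift_def)
lemma shift_Suc [simp]: "shift f (Suc n) = f n" by (simp add: shift_def)

lemma my_assoc_lemma:
  fixes f :: "nat \<Rightarrow> nat \<Rightarrow> nat \<Rightarrow> 'b::comm_monoid_add"
  shows "(\<Sum>j=0..k. \<Sum>i=0..j. f i (j - i) (n - j)) =
         (\<Sum>j=0..k. \<Sum>i=0..k - j. f j i (n - j - i))"
  by (induct k) (simp_all add: Suc_diff_le sum.distrib add.assoc)

lemma conv_assoc:
  assumes q: "q \<noteq> 0"
  shows "conv q (conv q f g) h n = conv q f (conv q g h) n"
proof -
  have "conv q (conv q f g) h n = (\<Sum>j=0..n. \<Sum>i=0..j. qstar q (qstar q (f i) (g (j - i))) (h (n - j)))"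
    by (simp add: conv_def qstar_sum_left)
  also have "\<dots> = (\<Sum>j=0..n. \<Sum>i=0..n - j. qstar q (qstar q (f j) (g i)) (h (n - j - i)))"
    by (rule my_assoc_lemma[where f="\<lambda>i a b. qstar q (qstar q (f i) (g a)) (h b)"])
  also have "\<dots> = conv q f (conv q g h) n"
    by (simp add: conv_def qstar_sum_right qstar_assoc[OF q])
  finally show ?thesis .
qed

lemma conv_dl_left [simp]: "conv q dl f n = f n"
proof -
  have "conv q dl f n = (\<Sum>i\<in>{0..n}. if i = 0 then f n else 0)"
    unfolding conv_def by (intro sum.cong) (auto simp: dl_def)
  then show ?thesis by simp
qed

lemma conv_dl_right [simp]: "conv q f dl n = f n"
proof -
  have "conv q f dl n = (\<Sum>i\<in>{0..n}. if i = n then f n else 0)"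
    unfolding conv_def by (intro sum.cong) (auto simp: dl_def)
  then show ?thesis by simp
qed

lemma conv_cong:
  assumes "\<And>i. i \<le> n \<Longrightarrow> f i = f' i" "\<And>i. i \<le> n \<Longrightarrow> g i = g' i"
  shows "conv q f g n = conv q f' g' n"
  unfolding conv_def using assms by (intro sum.cong) auto

lemma conv_add_left: "conv q (\<lambda>i. f i + g i) h n = conv q f h n + conv q g h n"
  by (simp add: conv_def qstar_add_left sum.distrib)
lemma conv_add_right: "conv q h (\<lambda>i. f i + g i) n = conv q h f n + conv q h g n"
  by (simp add: conv_def qstar_add_right sum.distrib)
lemma conv_diff_right: "conv q h (\<lambda>i. f i - g i) n = conv q h f n - conv q h g n"
  by (simp add: conv_def qstar_diff_right sum_subtractf)
lemma conv_uminus_left: "conv q (\<lambda>i. - f i) h n = - conv q f h n"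
  by (simp add: conv_def qstar_uminus_left sum_negf)
lemma conv_uminus_right: "conv q h (\<lambda>i. - f i) n = - conv q h f n"
  by (simp add: conv_def qstar_uminus_right sum_negf)
lemma conv_sc_left: "conv q (\<lambda>i. sc c (f i)) h n = sc c (conv q f h n)"
  by (simp add: conv_def qstar_sc_left sc_sum)
lemma conv_sc_right: "conv q h (\<lambda>i. sc c (f i)) n = sc c (conv q h f n)"
  by (simp add: conv_def qstar_sc_right sc_sum)
lemma conv_zero_left: "conv q (\<lambda>i. 0) h n = 0"
  by (simp add: conv_def)
lemma conv_zero_right: "conv q h (\<lambda>i. 0) n = 0"
  by (simp add: conv_def)

lemma conv_shift_left: "conv q (shift f) g n = shift (conv q f g) n"
proof (cases n)
  case 0 then show ?thesis by (simp add: conv_def)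
next
  case (Suc m)
  show ?thesis
    unfolding conv_def Suc by (subst sum.atLeast0_atMost_Suc_shift) simp
qed

lemma conv_shift_right: "conv q f (shift g) n = shift (conv q f g) n"
proof (cases n)
  case 0 then show ?thesis by (simp add: conv_def)
next
  case (Suc m)
  have "conv q f (shift g) n = (\<Sum>i\<in>{0..m}. qstar q (f i) (shift g (Suc m - i)))"
    by (simp add: conv_def Suc)
  also have "\<dots> = (\<Sum>i\<in>{0..m}. qstar q (f i) (g (m - i)))"
    by (intro sum.cong) (auto simp: Suc_diff_le)
  finally show ?thesis by (simp add: Suc conv_def)
qed

lemma conv_scale: "conv q (scale c f) (scale c g) n = sc (c ^ n) (conv q f g n)"
proof -
  have "conv q (scale c f) (scale c g) n = (\<Sum>i\<in>{0..n}. sc (c ^ n) (qstar q (f i) (g (n - i))))"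
    unfolding conv_def scale_def
    by (intro sum.cong) (auto simp: qstar_sc_left qstar_sc_right power_add[symmetric] mult.commute)
  then show ?thesis by (simp add: conv_def sc_sum)
qed

lemma scale_dl [simp]: "scale c dl = dl"
  by (rule ext) (simp add: scale_def dl_def)

lemma scale_scale: "scale c (scale d f) = scale (c * d) f"
  by (rule ext) (simp add: scale_def power_mult_distrib mult.commute)

lemma der_conv: "der a (conv q f g n) = conv q (\<lambda>i. der a (f i)) g n + conv q (\<lambda>i. Kop q a (f i)) (\<lambda>i. der a (g i)) n"
  by (simp add: conv_def der_sum der_qstar sum.distrib)

lemma Kop_conv: "q \<noteq> 0 \<Longrightarrow> Kop q a (conv q f g n) = conv q (\<lambda>i. Kop q a (f i)) (\<lambda>i. Kop q a (g i)) n"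
  by (simp add: conv_def Kop_sum Kop_qstar)

lemma lookup_conv_Nil: "lk (conv q f g n) [] = (\<Sum>i\<in>{0..n}. lk (f i) [] * lk (g (n - i)) [])"
  by (simp add: conv_def lookup_sum lookup_qstar_Nil)

lemma conv_cancel:
  assumes D0: "D 0 = wd []" and h: "\<And>n. conv q D Z n = 0"
  shows "Z n = 0"
proof (induction n rule: less_induct)
  case (less n)
  show ?case
  proof (cases n)
    case 0
    then show ?thesis using h[of 0] by (simp add: conv_def D0)
  next
    case (Suc m)
    have "conv q D Z n = qstar q (D 0) (Z n) + (\<Sum>i\<in>{0..m}. qstar q (D (Suc i)) (Z (n - Suc i)))"
      unfolding conv_def Suc by (subst sum.atLeast0_atMost_Suc_shift) simp
    also have "(\<Sum>i\<in>{0..m}. qstar q (D (Suc i)) (Z (n - Suc i))) = 0"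
      using less Suc by (intro sum.neutral) auto
    finally show ?thesis using h[of n] by (simp add: D0)
  qed
qed

lemma Wneg_Cons: "Wneg k = X # Gw k"
  by (simp add: Wneg_def Gw_def upt_conv_Cons map_Suc_upt[symmetric] del: upt_Suc)
lemma Wpos_Cons: "Wpos k = Y # Gtw k"
  by (simp add: Wpos_def Gtw_def upt_conv_Cons map_Suc_upt[symmetric] del: upt_Suc)
lemma Gw_0 [simp]: "Gw 0 = []" by (simp add: Gw_def)
lemma Gtw_0 [simp]: "Gtw 0 = []" by (simp add: Gtw_def)
lemma Gw_Suc: "Gw (Suc k) = Y # Wneg k"
  by (simp add: Wneg_def Gw_def upt_conv_Cons map_Suc_upt[symmetric] del: upt_Suc)
lemma Gtw_Suc: "Gtw (Suc k) = X # Wpos k"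
  by (simp add: Wpos_def Gtw_def upt_conv_Cons map_Suc_upt[symmetric] del: upt_Suc)

lemma wt_G: "wt (Gw k) a = 0"
  by (cases a; induction k) (auto simp: Gw_Suc Wneg_Cons bil_def)
lemma wt_Gt: "wt (Gtw k) a = 0"
  by (cases a; induction k) (auto simp: Gtw_Suc Wpos_Cons bil_def)
lemma wt_Wneg: "wt (Wneg k) a = (if a = X then 2 else -2)"
  by (cases a) (auto simp: Wneg_Cons wt_G bil_def)
lemma wt_Wpos: "wt (Wpos k) a = (if a = Y then 2 else -2)"
  by (cases a) (auto simp: Wpos_Cons wt_Gt bil_def)

lemma der_Wneg: "der a (wd (Wneg k)) = (if a = X then wd (Gw k) else 0)"
  by (simp add: Wneg_Cons der_wd_Cons)
lemma der_Wpos: "der a (wd (Wpos k)) = (if a = Y then wd (Gtw k) else 0)"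
  by (simp add: Wpos_Cons der_wd_Cons)
lemma der_Gw: "der a (wd (Gw k)) = (if a = Y then shift (\<lambda>k. wd (Wneg k)) k else 0)"
  by (cases k) (simp_all add: Gw_Suc der_wd_Cons)
lemma der_Gtw: "der a (wd (Gtw k)) = (if a = X then shift (\<lambda>k. wd (Wpos k)) k else 0)"
  by (cases k) (simp_all add: Gtw_Suc der_wd_Cons)

lemma lk_Wneg: "lk (wd (Wneg k)) [] = 0" by (simp add: Wneg_Cons lookup_wd)
lemma lk_Wpos: "lk (wd (Wpos k)) [] = 0" by (simp add: Wpos_Cons lookup_wd)


definition Gs :: "nat \<Rightarrow> 'a::field qvec" where "Gs n = wd (Gw n)"
definition Gts :: "nat \<Rightarrow> 'a::field qvec" where "Gts n = wd (Gtw n)"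
definition Wms :: "nat \<Rightarrow> 'a::field qvec" where "Wms n = wd (Wneg n)"
definition Wps :: "nat \<Rightarrow> 'a::field qvec" where "Wps n = wd (Wpos n)"

lemma shift_Wms: "shift (\<lambda>k. wd (Wneg k)) = shift Wms"
  by (simp add: Wms_def[abs_def])
lemma shift_Wps: "shift (\<lambda>k. wd (Wpos k)) = shift Wps"
  by (simp add: Wps_def[abs_def])

lemma der_Wms [simp]: "der a (Wms k) = (if a = X then Gs k else 0)"
  by (simp add: Wms_def Gs_def der_Wneg)
lemma der_Wps [simp]: "der a (Wps k) = (if a = Y then Gts k else 0)"
  by (simp add: Wps_def Gts_def der_Wpos)
lemma der_Gs [simp]: "der a (Gs k) = (if a = Y then shift Wms k else 0)"
  by (simp add: Gs_def der_Gw shift_Wms)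
lemma der_Gts [simp]: "der a (Gts k) = (if a = X then shift Wps k else 0)"
  by (simp add: Gts_def der_Gtw shift_Wps)
lemma Kop_Wms [simp]: "Kop q a (Wms k) = sc (q powi (if a = X then 2 else -2)) (Wms k)"
  by (simp add: Wms_def Kop_wd wt_Wneg)
lemma Kop_Wps [simp]: "Kop q a (Wps k) = sc (q powi (if a = Y then 2 else -2)) (Wps k)"
  by (simp add: Wps_def Kop_wd wt_Wpos)
lemma Kop_Gs [simp]: "Kop q a (Gs k) = Gs k"
  by (simp add: Gs_def Kop_wd wt_G)
lemma Kop_Gts [simp]: "Kop q a (Gts k) = Gts k"
  by (simp add: Gts_def Kop_wd wt_Gt)
lemma lk_Wms [simp]: "lk (Wms k) [] = 0" by (simp add: Wms_def lk_Wneg)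
lemma lk_Wps [simp]: "lk (Wps k) [] = 0" by (simp add: Wps_def lk_Wpos)
lemma lk_Gs_Suc [simp]: "lk (Gs (Suc k)) [] = 0" by (simp add: Gs_def Gw_Suc lookup_wd)
lemma lk_Gts_Suc [simp]: "lk (Gts (Suc k)) [] = 0" by (simp add: Gts_def Gtw_Suc lookup_wd)
lemma Gs_0 [simp]: "Gs 0 = wd []" by (simp add: Gs_def)
lemma Gts_0 [simp]: "Gts 0 = wd []" by (simp add: Gts_def)

lemma conv_dl_left_fun [simp]: "conv q dl f = f"
  by (rule ext) simp
lemma conv_dl_right_fun [simp]: "conv q f dl = f"
  by (rule ext) simp

lemma conv_add_left_fun: "conv q (\<lambda>i. f i + g i) h = (\<lambda>n. conv q f h n + conv q g h n)"
  by (rule ext) (rule conv_add_left)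
lemma conv_sc_left_fun: "conv q (\<lambda>i. sc c (f i)) h = (\<lambda>n. sc c (conv q f h n))"
  by (rule ext) (rule conv_sc_left)

lemma conv_assoc_fun: "q \<noteq> 0 \<Longrightarrow> conv q (conv q f g) h = conv q f (conv q g h)"
  by (rule ext) (rule conv_assoc)

lemma Kop_uminus: "Kop q a (- x) = - Kop q a x"
  by (rule poly_mapping_eqI) simp

lemma lk_scale: "lk (scale c f n) [] = c ^ n * lk (f n) []"
  by (simp add: scale_def)
lemma der_scale: "der a (scale c f n) = scale c (\<lambda>i. der a (f i)) n"
  by (simp add: scale_def der_sc)

lemma der_dl [simp]: "der a (dl n) = 0"
  by (simp add: dl_def)

lemma conv_lk_zero_right:
  assumes "\<And>i. lk (g i) [] = 0"
  shows "lk (conv q f g n) [] = 0"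
  by (simp add: lookup_conv_Nil assms)



lemma q2inv: "q \<noteq> 0 \<Longrightarrow> q powi (-2) * q ^ 2 = (1::'a::field)"
  by (simp add: power_int_minus field_simps)

lemma conv_zero_left': "f = (\<lambda>i. 0) \<Longrightarrow> conv q f h n = 0"
  by (simp add: conv_zero_left)
lemma conv_zero_right': "f = (\<lambda>i. 0) \<Longrightarrow> conv q h f n = 0"
  by (simp add: conv_zero_right)

lemma Kid:
  assumes q: "q \<noteq> 0"
  shows "conv q Gts (scale (q^2) Wps) n = conv q Wps (scale (q^2) Gts) n"
proof (rule qv_ext)
  show "lk (conv q Gts (scale (q^2) Wps) n) [] = lk (conv q Wps (scale (q^2) Gts) n) []"
    by (simp add: lookup_conv_Nil lk_scale)
  fix a
  show "der a (conv q Gts (scale (q^2) Wps) n) = der a (conv q Wps (scale (q^2) Gts) n)"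
  proof (cases a)
    case Y
    have "der a (conv q Gts (scale (q^2) Wps) n) = conv q Gts (scale (q^2) Gts) n"
      by (simp add: Y der_conv der_scale conv_zero_left')
    also have "\<dots> = der a (conv q Wps (scale (q^2) Gts) n)"
      by (simp add: Y der_conv der_scale scale_def der_sc conv_zero_right')
    finally show ?thesis .
  next
    case X
    let ?c = "q^2"
    have e: "(\<lambda>i. der X (scale ?c Gts i)) = (\<lambda>i. sc ?c (shift (scale ?c Wps) i))"
      by (rule ext) (auto simp: der_scale scale_def der_sc split: nat.split simp: shift_def)
    have "der a (conv q Gts (scale (q^2) Wps) n) = shift (conv q Wps (scale ?c Wps)) n"
      by (simp add: X der_conv der_scale scale_def der_sc conv_zero_right' conv_shift_left)
    also have "\<dots> = sc (q powi (-2)) (sc ?c (shift (conv q Wps (scale ?c Wps)) n))"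
      using q2inv[OF q] by simp
    also have "\<dots> = der a (conv q Wps (scale (q^2) Gts) n)"
      by (simp only: X der_conv e conv_sc_left conv_sc_right conv_shift_right Kop_Wps)
         (simp add: conv_zero_left')
    finally show ?thesis .
  qed
qed

context
  fixes q :: "'a::field" and D :: "nat \<Rightarrow> 'a qvec"
  assumes q: "q \<noteq> 0" and D0: "D 0 = wd []" and DG: "\<And>n. conv q D Gts n = dl n"
begin

lemma DG_fun: "conv q D Gts = dl"
  by (rule ext) (rule DG)

lemma GD: "conv q Gts D n = dl n"
proof -
  have "conv q D (\<lambda>n. conv q Gts D n - dl n) n = 0" for n
  proof -
    have "conv q D (\<lambda>n. conv q Gts D n - dl n) n = conv q D (conv q Gts D) n - conv q D dl n"
      by (rule conv_diff_right)
    also have "conv q D (conv q Gts D) n = conv q (conv q D Gts) D n"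
      by (simp add: conv_assoc[OF q])
    also have "\<dots> = D n" by (simp add: DG_fun)
    finally show ?thesis by simp
  qed
  then have "conv q Gts D n - dl n = 0"
    using conv_cancel[where D=D and q=q and Z="\<lambda>n. conv q Gts D n - dl n", OF D0] by blast
  then show ?thesis by simp
qed

lemma GD_fun: "conv q Gts D = dl"
  by (rule ext) (rule GD)

lemma D_rec: "D (Suc m) = - (\<Sum>i\<in>{0..m}. qstar q (D i) (Gts (Suc m - i)))"
proof -
  have "conv q D Gts (Suc m) = (\<Sum>i\<in>{0..m}. qstar q (D i) (Gts (Suc m - i))) + D (Suc m)"
    by (simp add: conv_def)
  then have "(\<Sum>i\<in>{0..m}. qstar q (D i) (Gts (Suc m - i))) + D (Suc m) = 0"
    using DG[of "Suc m"] by (simp add: dl_def)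
  then show ?thesis by (simp add: eq_neg_iff_add_eq_0 add.commute)
qed

lemma D_Kop: "Kop q a (D n) = D n"
proof (induction n rule: less_induct)
  case (less n)
  show ?case
  proof (cases n)
    case 0 then show ?thesis by (simp add: D0 Kop_wd)
  next
    case (Suc m)
    have "Kop q a (D (Suc m)) = - (\<Sum>i\<in>{0..m}. qstar q (Kop q a (D i)) (Kop q a (Gts (Suc m - i))))"
      by (subst D_rec) (simp add: Kop_uminus Kop_sum Kop_qstar[OF q])
    also have "\<dots> = D (Suc m)"
      by (subst D_rec) (auto intro!: sum.cong arg_cong[where f=uminus] simp: less.IH Suc)
    finally show ?thesis using Suc by simp
  qed
qed

lemma D_Kop_fun [simp]: "(\<lambda>i. Kop q a (D i)) = D"
  by (rule ext) (rule D_Kop)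

lemma D_lk: "lk (D (Suc m)) [] = 0"
proof -
  have "lk (D (Suc m)) [] = - (\<Sum>i\<in>{0..m}. lk (D i) [] * lk (Gts (Suc m - i)) [])"
    by (subst D_rec) (simp add: lookup_sum lookup_qstar_Nil)
  also have "\<dots> = 0"
    by (auto intro!: sum.neutral simp: Suc_diff_le)
  finally show ?thesis .
qed

lemma D_derY: "der Y (D n) = 0"
proof (induction n rule: less_induct)
  case (less n)
  show ?case
  proof (cases n)
    case 0 then show ?thesis by (simp add: D0)
  next
    case (Suc m)
    have "der Y (D (Suc m)) = - (\<Sum>i\<in>{0..m}. qstar q (der Y (D i)) (Gts (Suc m - i))
                         + qstar q (Kop q Y (D i)) (der Y (Gts (Suc m - i))))"
      by (subst D_rec) (simp add: der_uminus der_sum der_qstar)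
    also have "\<dots> = 0"
      using less Suc by (auto intro!: sum.neutral)
    finally show ?thesis using Suc by simp
  qed
qed

lemma D_derY_fun [simp]: "(\<lambda>i. der Y (D i)) = (\<lambda>i. 0)"
  by (rule ext) (rule D_derY)

lemma dD_Gt: "conv q (\<lambda>i. der X (D i)) Gts n = - shift (conv q D Wps) n"
proof -
  have "0 = der X (conv q D Gts n)" by (simp add: DG)
  also have "\<dots> = conv q (\<lambda>i. der X (D i)) Gts n + conv q D (shift Wps) n"
    by (simp add: der_conv)
  finally show ?thesis
    by (simp add: conv_shift_right eq_neg_iff_add_eq_0)
qed

lemma dD: "der X (D n) = - shift (conv q (conv q D Wps) D) n"
proof -
  have e: "conv q (\<lambda>i. der X (D i)) Gts = (\<lambda>n. - shift (conv q D Wps) n)"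
    by (rule ext) (rule dD_Gt)
  have "der X (D n) = conv q (\<lambda>i. der X (D i)) (conv q Gts D) n"
    by (simp add: GD_fun)
  also have "\<dots> = conv q (conv q (\<lambda>i. der X (D i)) Gts) D n"
    by (simp add: conv_assoc[OF q])
  also have "\<dots> = conv q (\<lambda>n. - shift (conv q D Wps) n) D n"
    unfolding e ..
  also have "\<dots> = - shift (conv q (conv q D Wps) D) n"
    by (simp add: conv_uminus_left conv_shift_left[where f="conv q D Wps", symmetric])
  finally show ?thesis .
qed


lemma DW_fun: "conv q D Wps = scale (q^2) (conv q Wps D)"
proof (rule ext)
  fix n
  let ?c = "q^2"
  have kf: "conv q Gts (scale ?c Wps) = conv q Wps (scale ?c Gts)"
    by (rule ext) (rule Kid[OF q])
  have sGD: "conv q (scale ?c Gts) (scale ?c D) = dl"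
    by (rule ext) (simp add: conv_scale GD dl_def)
  have sWD: "conv q (scale ?c Wps) (scale ?c D) = scale ?c (conv q Wps D)"
    by (rule ext) (simp add: conv_scale scale_def)
  have "conv q D (conv q (conv q Gts (scale ?c Wps)) (scale ?c D)) n
      = conv q (conv q D (conv q Gts (scale ?c Wps))) (scale ?c D) n"
    by (simp add: conv_assoc[OF q])
  also have "conv q D (conv q Gts (scale ?c Wps)) = conv q (conv q D Gts) (scale ?c Wps)"
    by (simp add: conv_assoc_fun[OF q])
  also have "conv q (conv q (conv q D Gts) (scale ?c Wps)) (scale ?c D) n = scale ?c (conv q Wps D) n"
    by (simp add: DG_fun conv_dl_left_fun sWD)
  finally have A: "conv q D (conv q (conv q Gts (scale ?c Wps)) (scale ?c D)) n = scale ?c (conv q Wps D) n" .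
  have "conv q D (conv q (conv q Gts (scale ?c Wps)) (scale ?c D)) n = conv q D (conv q Wps (conv q (scale ?c Gts) (scale ?c D))) n"
    by (simp add: kf conv_assoc_fun[OF q])
  also have "\<dots> = conv q D Wps n"
    by (simp add: sGD conv_dl_right_fun)
  finally show "conv q D Wps n = scale ?c (conv q Wps D) n" using A by simp
qed

lemma der_conv_Wms_D_Y: "der Y (conv q (conv q Wms D) Wps m) = sc (q powi (-2)) (Wms m)"
proof -
  have e1: "(\<lambda>i. der Y (conv q Wms D i)) = (\<lambda>i. 0)"
    by (rule ext) (simp add: der_conv conv_zero_left' conv_zero_right')
  have e2: "(\<lambda>i. Kop q Y (conv q Wms D i)) = (\<lambda>i. sc (q powi (-2)) (conv q Wms D i))"
    by (rule ext) (simp add: Kop_conv[OF q] conv_sc_left)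
  have e3: "(\<lambda>i. der Y (Wps i)) = Gts" by (rule ext) simp
  have "der Y (conv q (conv q Wms D) Wps m) = sc (q powi (-2)) (conv q (conv q Wms D) Gts m)"
    by (simp only: der_conv e1 e2 e3 conv_zero_left conv_sc_left) (simp add: conv_zero_left conv_zero_right)
  also have "\<dots> = sc (q powi (-2)) (Wms m)"
    by (simp add: conv_assoc[OF q] DG_fun)
  finally show ?thesis .
qed

lemma claimA: "Gs n = scale (q^2) D n + sc (q^2) (shift (conv q (conv q Wms D) Wps) n)"
proof (induction n rule: less_induct)
  case (less n)
  let ?c = "q^2"
  let ?TA = "conv q (conv q Wms D) Wps"
  let ?P = "conv q (conv q D Wps) D"
  show ?case
  proof (cases n)
    case 0
    then show ?thesis by (simp add: scale_def D0)
  next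
    case (Suc m)
    show ?thesis
    proof (rule qv_ext)
      show "lk (Gs n) [] = lk (scale ?c D n + sc ?c (shift ?TA n)) []"
        by (simp add: Suc lookup_add lk_scale D_lk lookup_conv_Nil)
      fix a
      show "der a (Gs n) = der a (scale ?c D n + sc ?c (shift ?TA n))"
      proof (cases a)
        case Y
        have "der a (scale ?c D n + sc ?c (shift ?TA n)) = sc ?c (sc (q powi (-2)) (Wms m))"
          by (simp add: Y Suc der_add der_scale der_sc der_conv_Wms_D_Y scale_def D_derY)
        also have "\<dots> = Wms m" using q2inv[OF q] by (simp add: mult.commute)
        finally show ?thesis by (simp add: Y Suc)
      next
        case X
        define dDf where "dDf = (\<lambda>i. der X (D i))"
        have dDf: "dDf = (\<lambda>i. - shift ?P i)"
          by (rule ext) (simp add: dDf_def dD)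
        have e1: "(\<lambda>i. der X (conv q Wms D i)) = (\<lambda>i. conv q Gs D i + sc ?c (conv q Wms dDf i))"
          by (rule ext) (simp add: der_conv conv_sc_left dDf_def)
        have e2: "(\<lambda>i. der X (Wps i)) = (\<lambda>i. 0)" by (rule ext) simp
        have dTA: "der X (?TA m) = conv q (conv q Gs D) Wps m + sc ?c (conv q (conv q Wms dDf) Wps m)"
        proof -
          have "der X (?TA m) = conv q (\<lambda>i. der X (conv q Wms D i)) Wps m
               + conv q (\<lambda>i. Kop q X (conv q Wms D i)) (\<lambda>i. der X (Wps i)) m"
            by (rule der_conv)
          also have "\<dots> = conv q (\<lambda>i. conv q Gs D i + sc ?c (conv q Wms dDf i)) Wps m"
            unfolding e1 e2 by (simp add: conv_zero_right)
          also have "\<dots> = conv q (conv q Gs D) Wps m + sc ?c (conv q (conv q Wms dDf) Wps m)"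
            by (simp add: conv_add_left conv_sc_left)
          finally show ?thesis .
        qed
        have IH: "conv q (conv q Gs D) Wps m =
                  conv q (conv q (\<lambda>i. scale ?c D i + sc ?c (shift ?TA i)) D) Wps m"
          by (intro conv_cong refl) (use less Suc in auto)
        also have "\<dots> = conv q (conv q (scale ?c D) D) Wps m + sc ?c (conv q (conv q (shift ?TA) D) Wps m)"
          by (simp only: conv_add_left_fun conv_sc_left_fun conv_add_left conv_sc_left)
        finally have IH': "conv q (conv q Gs D) Wps m = conv q (conv q (scale ?c D) D) Wps m + sc ?c (conv q (conv q (shift ?TA) D) Wps m)" .
        have s1: "conv q (conv q (shift ?TA) D) Wps m = shift (conv q (conv q ?TA D) Wps) m"
          by (simp add: conv_shift_left[abs_def])
        have s2: "conv q (conv q Wms dDf) Wps m = - shift (conv q (conv q Wms ?P) Wps) m"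
          by (simp add: dDf conv_uminus_right[abs_def] conv_uminus_left conv_shift_right[abs_def] conv_shift_left[abs_def])
        have s3: "conv q (conv q ?TA D) Wps = conv q (conv q Wms ?P) Wps"
          by (simp add: conv_assoc_fun[OF q])
        have A: "conv q (conv q (scale ?c D) D) Wps m = sc (?c ^ m) (?P m)"
        proof -
          have "conv q (conv q (scale ?c D) D) Wps m = conv q (scale ?c D) (conv q D Wps) m"
            by (simp add: conv_assoc[OF q])
          also have "\<dots> = conv q (scale ?c D) (scale ?c (conv q Wps D)) m"
            by (simp add: DW_fun)
          also have "\<dots> = sc (?c ^ m) (conv q D (conv q Wps D) m)"
            by (rule conv_scale)
          also have "\<dots> = sc (?c ^ m) (?P m)"
            by (simp add: conv_assoc[OF q])
          finally show ?thesis .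
        qed
        have "der a (scale ?c D n + sc ?c (shift ?TA n))
            = sc (?c ^ Suc m) (- ?P m) + sc ?c (sc (?c ^ m) (?P m))"
          by (simp add: X Suc der_add der_scale der_sc scale_def dD dTA IH' s1 s2 s3 A sc_add sc_uminus
                   flip: dDf_def)
        also have "\<dots> = 0"
          by (simp add: sc_uminus mult.commute)
        finally show ?thesis by (simp add: X Suc)
      qed
    qed
  qed
qed


lemma qpm2: "q powi (-2) = inverse (q^2)"
  by (simp add: power_int_minus)

lemma WD_fun: "conv q Wps D = scale (inverse (q^2)) (conv q D Wps)"
  by (simp add: DW_fun scale_scale q) (rule ext, simp add: scale_def)

lemma claimB: "Gs n = scale (inverse (q^2)) D n + shift (conv q (conv q Wps D) Wms) n"
proof (induction n rule: less_induct)
  case (less n)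
  let ?c = "inverse (q^2)"
  let ?TB = "conv q (conv q Wps D) Wms"
  let ?P = "conv q (conv q D Wps) D"
  show ?case
  proof (cases n)
    case 0
    then show ?thesis by (simp add: scale_def D0)
  next
    case (Suc m)
    show ?thesis
    proof (rule qv_ext)
      show "lk (Gs n) [] = lk (scale ?c D n + shift ?TB n) []"
        by (simp add: Suc lookup_add lk_scale D_lk lookup_conv_Nil)
      fix a
      show "der a (Gs n) = der a (scale ?c D n + shift ?TB n)"
      proof (cases a)
        case Y
        have e1: "(\<lambda>i. der Y (conv q Wps D i)) = dl"
          by (rule ext) (simp add: der_conv conv_zero_right' GD)
        have e2: "(\<lambda>i. der Y (Wms i)) = (\<lambda>i. 0)" by (rule ext) simp
        have "der Y (?TB m) = Wms m"
        proof -
          have "der Y (?TB m) = conv q (\<lambda>i. der Y (conv q Wps D i)) Wms m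
               + conv q (\<lambda>i. Kop q Y (conv q Wps D i)) (\<lambda>i. der Y (Wms i)) m"
            by (rule der_conv)
          also have "\<dots> = Wms m"
            unfolding e1 e2 by (simp add: conv_zero_right)
          finally show ?thesis .
        qed
        then show ?thesis
          by (simp add: Y Suc der_add der_scale der_sc scale_def D_derY)
      next
        case X
        define dDf where "dDf = (\<lambda>i. der X (D i))"
        have dDf: "dDf = (\<lambda>i. - shift ?P i)"
          by (rule ext) (simp add: dDf_def dD)
        have e1: "(\<lambda>i. der X (conv q Wps D i)) = (\<lambda>i. sc ?c (conv q Wps dDf i))"
          by (rule ext) (simp add: der_conv conv_sc_left dDf_def qpm2 conv_zero_left')
        have e2: "(\<lambda>i. Kop q X (conv q Wps D i)) = (\<lambda>i. sc ?c (conv q Wps D i))"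
          by (rule ext) (simp add: Kop_conv[OF q] conv_sc_left qpm2)
        have e3: "(\<lambda>i. der X (Wms i)) = Gs" by (rule ext) simp
        have dTB: "der X (?TB m) = sc ?c (conv q (conv q Wps dDf) Wms m) + sc ?c (conv q (conv q Wps D) Gs m)"
        proof -
          have "der X (?TB m) = conv q (\<lambda>i. der X (conv q Wps D i)) Wms m
               + conv q (\<lambda>i. Kop q X (conv q Wps D i)) (\<lambda>i. der X (Wms i)) m"
            by (rule der_conv)
          also have "\<dots> = sc ?c (conv q (conv q Wps dDf) Wms m) + sc ?c (conv q (conv q Wps D) Gs m)"
            unfolding e1 e2 e3 by (simp only: conv_sc_left)
          finally show ?thesis .
        qed
        have IH: "conv q (conv q Wps D) Gs m =
                  conv q (conv q Wps D) (\<lambda>i. scale ?c D i + shift ?TB i) m"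
          by (intro conv_cong refl) (use less Suc in auto)
        also have "\<dots> = conv q (conv q Wps D) (scale ?c D) m + conv q (conv q Wps D) (shift ?TB) m"
          by (rule conv_add_right)
        finally have IH': "conv q (conv q Wps D) Gs m = conv q (conv q Wps D) (scale ?c D) m + conv q (conv q Wps D) (shift ?TB) m" .
        have s1: "conv q (conv q Wps D) (shift ?TB) m = shift (conv q (conv q Wps D) ?TB) m"
          by (rule conv_shift_right)
        have s2: "conv q (conv q Wps dDf) Wms m = - shift (conv q (conv q Wps ?P) Wms) m"
          by (simp add: dDf conv_uminus_right[abs_def] conv_uminus_left conv_shift_right[abs_def] conv_shift_left[abs_def])
        have s3: "conv q (conv q Wps D) ?TB = conv q (conv q Wps ?P) Wms"
          by (simp add: conv_assoc_fun[OF q])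
        have A: "conv q (conv q Wps D) (scale ?c D) m = sc (?c ^ m) (?P m)"
        proof -
          have "conv q (conv q Wps D) (scale ?c D) m = conv q (scale ?c (conv q D Wps)) (scale ?c D) m"
            by (simp only: WD_fun)
          also have "\<dots> = sc (?c ^ m) (?P m)"
            by (rule conv_scale)
          finally show ?thesis .
        qed
        have "der a (scale ?c D n + shift ?TB n)
            = sc (?c ^ Suc m) (- ?P m) + (sc ?c (- shift (conv q (conv q Wps ?P) Wms) m)
               + sc ?c (sc (?c ^ m) (?P m) + shift (conv q (conv q Wps ?P) Wms) m))"
          by (simp only: X Suc der_add der_scale der_sc scale_def dD dTB IH' s1 s2 s3 A shift_Suc
                   flip: dDf_def)
        also have "\<dots> = 0"
          by (simp add: sc_uminus sc_add mult.commute)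
        finally show ?thesis by (simp add: X Suc)
      qed
    qed
  qed
qed

end


lemma triple_sum1:
  fixes F :: "nat \<Rightarrow> nat \<Rightarrow> nat \<Rightarrow> 'b::comm_monoid_add"
  shows "(\<Sum>(i, j, k)\<in>{(i, j, k). i + j + k + 1 = Suc m}. F i j k)
       = (\<Sum>l\<in>{0..m}. \<Sum>i\<in>{0..l}. F i (l - i) (m - l))"
proof -
  have "(\<Sum>l\<in>{0..m}. \<Sum>i\<in>{0..l}. F i (l - i) (m - l)) = (\<Sum>(l, i)\<in>Sigma {0..m} (\<lambda>l. {0..l}). F i (l - i) (m - l))"
    by (rule sum.Sigma) auto
  also have "\<dots> = (\<Sum>(i, j, k)\<in>{(i, j, k). i + j + k + 1 = Suc m}. F i j k)"
    by (rule sum.reindex_bij_witness[where i="\<lambda>(i, j, k). (i + j, i)" and j="\<lambda>(l, i). (i, l - i, m - l)"])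
       auto
  finally show ?thesis by simp
qed

lemma triple_sum2:
  fixes F :: "nat \<Rightarrow> nat \<Rightarrow> nat \<Rightarrow> 'b::comm_monoid_add"
  shows "(\<Sum>(i, j, k)\<in>{(i, j, k). i + j + k + 1 = Suc m}. F i j k)
       = (\<Sum>l\<in>{0..m}. \<Sum>k\<in>{0..l}. F (m - l) (l - k) k)"
proof -
  have "(\<Sum>l\<in>{0..m}. \<Sum>k\<in>{0..l}. F (m - l) (l - k) k) = (\<Sum>(l, k)\<in>Sigma {0..m} (\<lambda>l. {0..l}). F (m - l) (l - k) k)"
    by (rule sum.Sigma) auto
  also have "\<dots> = (\<Sum>(i, j, k)\<in>{(i, j, k). i + j + k + 1 = Suc m}. F i j k)"
    by (rule sum.reindex_bij_witness[where i="\<lambda>(i, j, k). (j + k, k)" and j="\<lambda>(l, k). (m - l, l - k, k)"])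
       auto
  finally show ?thesis by simp
qed

lemma triple_empty: "{(i, j, k). i + j + k + 1 = (0::nat)} = {}"
  by auto

theorem theorem9p15:
  fixes q :: "'a::field" and D :: "nat \<Rightarrow> 'a qvec" and n :: nat
  assumes q_nz: "q \<noteq> 0"
    and q_nroot: "\<forall>m::nat. m > 0 \<longrightarrow> q ^ m \<noteq> 1"
    and D0: "D 0 = one_V"
    and Drec: "\<forall>m::nat. m \<ge> 1 \<longrightarrow> (\<Sum>i\<in>{0..m}. qstar q (D i) (wd (Gtw (m - i)))) = 0"
  shows "(wd (Gw n) = sc (q ^ (2 * n)) (D n)
           + sc (q ^ 2) (\<Sum>(i, j, k)\<in>{(i, j, k). i + j + k + 1 = n}.
                            qstar q (qstar q (wd (Wneg i)) (D j)) (wd (Wpos k))))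
      \<and> (wd (Gw n) = sc (q powi (- 2 * int n)) (D n)
           + (\<Sum>(i, j, k)\<in>{(i, j, k). i + j + k + 1 = n}.
                            qstar q (qstar q (wd (Wpos k)) (D j)) (wd (Wneg i))))"
proof -
  have D0': "D 0 = wd []" using D0 by (simp add: one_V_def)
  have DG: "conv q D Gts m = dl m" for m
  proof (cases m)
    case 0 then show ?thesis by (simp add: conv_def dl_def D0')
  next
    case (Suc k)
    then show ?thesis using Drec[rule_format, of m] by (simp add: conv_def dl_def Gts_def)
  qed
  have A: "Gs n = scale (q^2) D n + sc (q^2) (shift (conv q (conv q Wms D) Wps) n)"
    by (rule claimA[OF q_nz D0' DG])
  have B: "Gs n = scale (inverse (q^2)) D n + shift (conv q (conv q Wps D) Wms) n"
    by (rule claimB[OF q_nz D0' DG])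
  have TA: "shift (conv q (conv q Wms D) Wps) n = (\<Sum>(i, j, k)\<in>{(i, j, k). i + j + k + 1 = n}.
                            qstar q (qstar q (wd (Wneg i)) (D j)) (wd (Wpos k)))"
  proof (cases n)
    case 0 then show ?thesis unfolding 0 triple_empty by simp
  next
    case (Suc m)
    show ?thesis
      unfolding Suc triple_sum1 by (simp add: conv_def qstar_sum_left Wms_def Wps_def)
  qed
  have TB: "shift (conv q (conv q Wps D) Wms) n = (\<Sum>(i, j, k)\<in>{(i, j, k). i + j + k + 1 = n}.
                            qstar q (qstar q (wd (Wpos k)) (D j)) (wd (Wneg i)))"
  proof (cases n)
    case 0 then show ?thesis unfolding 0 triple_empty by simp
  next
    case (Suc m)
    show ?thesis
      unfolding Suc triple_sum2 by (simp add: conv_def qstar_sum_left Wms_def Wps_def)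
  qed
  have s1: "scale (q^2) D n = sc (q ^ (2 * n)) (D n)"
    by (simp add: scale_def power_mult)
  have "q powi (- 2 * int n) = inverse (q ^ (2 * n))"
    by (simp add: power_int_minus flip: power_int_of_nat)
  then have s2: "scale (inverse (q^2)) D n = sc (q powi (- 2 * int n)) (D n)"
    by (simp add: scale_def power_mult power_inverse)
  show ?thesis
    using A B unfolding TA TB s1 s2 Gs_def by simp
qed

end
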